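(* Let $r,s$ be real numbers with $s > 3\sqrt{3}\, r > 0$, and let $C_{r,s} \subset \mathbb{P}^2$ be the nonsingular projective cubic $s(xyz - r^2 z^3) = x^2 y + x y^2$, with the group law on its real points in which the identity is $[1,-1,0]$ and $P+Q$ is the reflection in the line $y=x$ of the third intersection point of $C_{r,s}$ with the line through $P$ and $Q$ (tangent line if $P=Q$). Then no affine point $(x,y)$ of $C_{r,s}$ with $x>0$ and $y>0$ has finite odd order in this group.
   Context: Points $(x,y)$ on $C_{r,s}$ with $x>0,y>0$ are called triangle points. *)

theory Defs
  imports Complex_Main
begin

text \<open>Points of the real projective plane are represented by nonzero triples
  (homogeneous coordinates); two triples represent the same point iff they are
  proportional by a nonzero factor.\<close>

type_synonym pt = "real \<times> real \<times> real"

definition proj_eq :: "pt \<Rightarrow> pt \<Rightarrow> bool" where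
  "proj_eq P Q \<longleftrightarrow> P \<noteq> (0,0,0) \<and> (\<exists>c::real. c \<noteq> 0 \<and>
      Q = (c * fst P, c * fst (snd P), c * snd (snd P)))"

definition lc :: "real \<Rightarrow> pt \<Rightarrow> real \<Rightarrow> pt \<Rightarrow> pt" where
  "lc a U b V = (a * fst U + b * fst V,
                 a * fst (snd U) + b * fst (snd V),
                 a * snd (snd U) + b * snd (snd V))"

definition Fc :: "real \<Rightarrow> real \<Rightarrow> pt \<Rightarrow> real" where
  "Fc r s P = (case P of (x, y, z) \<Rightarrow> s * (x*y*z - r^2 * z^3) - (x^2 * y + x * y^2))"

definition on_curve :: "real \<Rightarrow> real \<Rightarrow> pt \<Rightarrow> bool" where
  "on_curve r s P \<longleftrightarrow> P \<noteq> (0,0,0) \<and> Fc r s P = 0"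

text \<open>R is the third intersection point of C_{r,s} with the line through P and Q
  (tangent line if P = Q): there is a line, parametrised by
  (\<lambda>,\<mu>) \<mapsto> \<lambda>U + \<mu>V with U, V linearly independent, containing P, Q, R such that
  the restriction of the cubic form to the line is a nonzero multiple of the
  product of the three linear forms vanishing at the parameters of P, Q, R;
  i.e. the intersection of the line with the curve is P + Q + R counted with
  multiplicity.\<close>
definition third_pt :: "real \<Rightarrow> real \<Rightarrow> pt \<Rightarrow> pt \<Rightarrow> pt \<Rightarrow> bool" where
  "third_pt r s P Q R \<longleftrightarrow>
     on_curve r s P \<and> on_curve r s Q \<and> on_curve r s R \<and>
     (\<exists>U V p1 p2 q1 q2 r1 r2 k.
        (\<forall>a b. lc a U b V = (0,0,0) \<longrightarrow> a = 0 \<and> b = 0) \<and>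
        P = lc p1 U p2 V \<and> Q = lc q1 U q2 V \<and> R = lc r1 U r2 V \<and> k \<noteq> 0 \<and>
        (\<forall>la mu. Fc r s (lc la U mu V) =
            k * (p2*la - p1*mu) * (q2*la - q1*mu) * (r2*la - r1*mu)))"

definition swap_xy :: "pt \<Rightarrow> pt" where
  "swap_xy P = (case P of (x, y, z) \<Rightarrow> (y, x, z))"

definition cadd :: "real \<Rightarrow> real \<Rightarrow> pt \<Rightarrow> pt \<Rightarrow> pt" where
  "cadd r s P Q = swap_xy (SOME R. third_pt r s P Q R)"

definition O_pt :: pt where
  "O_pt = (1, -1, 0)"

fun cmult :: "real \<Rightarrow> real \<Rightarrow> nat \<Rightarrow> pt \<Rightarrow> pt" where
  "cmult r s 0 P = O_pt"
| "cmult r s (Suc n) P = cadd r s P (cmult r s n P)"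

definition has_finite_order :: "real \<Rightarrow> real \<Rightarrow> pt \<Rightarrow> bool" where
  "has_finite_order r s P \<longleftrightarrow> (\<exists>n>0. proj_eq (cmult r s n P) O_pt)"

definition point_order :: "real \<Rightarrow> real \<Rightarrow> pt \<Rightarrow> nat" where
  "point_order r s P = (LEAST n. n > 0 \<and> proj_eq (cmult r s n P) O_pt)"

end

theory Submission
  imports Defs
begin


lemma quad_zero:
  fixes A B C x0 x1 x2 :: real
  assumes "A*x0^2+B*x0+C=0" "A*x1^2+B*x1+C=0" "A*x2^2+B*x2+C=0"
    "x0\<noteq>x1" "x0\<noteq>x2" "x1\<noteq>x2"
  shows "A=0 \<and> B=0 \<and> C=0"
proof -
  have e1: "(x0-x1)*(A*(x0+x1)+B) = 0" using assms(1,2) by (simp add: algebra_simps power2_eq_square)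
  have e2: "(x0-x2)*(A*(x0+x2)+B) = 0" using assms(1,3) by (simp add: algebra_simps power2_eq_square)
  have a1: "A*(x0+x1)+B = 0" using e1 assms(4) by simp
  have a2: "A*(x0+x2)+B = 0" using e2 assms(5) by simp
  have "A*(x1-x2) = 0"
  proof -
    have "A*(x1-x2) = (A*(x0+x1)+B) - (A*(x0+x2)+B)" by (simp add: algebra_simps)
    thus ?thesis using a1 a2 by simp
  qed
  hence A: "A=0" using assms(6) by simp
  hence "B=0" using a1 by simp
  with A show ?thesis using assms(1) by simp
qed

lemma roots:
  fixes r s :: real
  assumes "r>0" "s^2>27*r^2" "s>0"
  shows "\<exists>u0 u1 u2. u0<0 \<and> 0<u1 \<and> u1<u2 \<and> u2<s \<and>
     (\<forall>t. t^2*(s-t) - 4*s*r^2 = -((t-u0)*(t-u1)*(t-u2)))"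
proof -
  define f where "f = (\<lambda>t::real. t^2*(s-t) - 4*s*r^2)"
  have cont: "\<And>a b. continuous_on {a..b} f" unfolding f_def by (intro continuous_intros)
  have f0: "f 0 < 0" using assms unfolding f_def by simp
  have fs: "f s < 0" using assms unfolding f_def by simp
  have fm: "f (2*s/3) > 0" using assms unfolding f_def by (simp add: power2_eq_square field_simps)
  have "r^2 < 3*s^2" using assms(2) zero_le_power2[of r] by linarith
  hence fn: "f (-2*s) > 0" using assms unfolding f_def by (simp add: power2_eq_square field_simps)
  obtain u0 where u0: "-2*s \<le> u0" "u0 \<le> 0" "f u0 = 0"
    using IVT2'[of f 0 0 "-2*s"] f0 fn cont assms by force
  obtain u1 where u1: "0 \<le> u1" "u1 \<le> 2*s/3" "f u1 = 0"
    using IVT'[of f 0 0 "2*s/3"] f0 fm cont assms by force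
  obtain u2 where u2: "2*s/3 \<le> u2" "u2 \<le> s" "f u2 = 0"
    using IVT2'[of f s 0 "2*s/3"] fs fm cont assms by force
  have ne: "u0 \<noteq> 0" "u1 \<noteq> 0" "u2 \<noteq> s"
    using u0 u1 u2 f0 fm fs by auto
  have ne2: "u1 \<noteq> 2*s/3" using u1(3) fm by (metis less_irrefl)
  have ne3: "u2 \<noteq> 2*s/3" using u2(3) fm by (metis less_irrefl)
  have o: "u0<0" "0<u1" "u1<u2" "u2<s" using ne ne2 ne3 u0 u1 u2 by auto
  define A where "A = s - (u0+u1+u2)"
  define B where "B = u0*u1+u0*u2+u1*u2"
  define C where "C = -(4*s*r^2 + u0*u1*u2)"
  have gen: "\<And>t. f t + (t-u0)*(t-u1)*(t-u2) = A*t^2+B*t+C"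
    unfolding f_def A_def B_def C_def by (simp add: algebra_simps power2_eq_square power3_eq_cube)
  have g0: "A*u0^2+B*u0+C=0" using gen[of u0] u0 by simp
  have g1: "A*u1^2+B*u1+C=0" using gen[of u1] u1 by simp
  have g2: "A*u2^2+B*u2+C=0" using gen[of u2] u2 by simp
  have z: "A=0 \<and> B=0 \<and> C=0"
    using quad_zero[OF g0 g1 g2] o by auto
  show ?thesis
    apply (rule exI[of _ u0], rule exI[of _ u1], rule exI[of _ u2])
    using o gen z unfolding f_def by (auto simp: algebra_simps)
qed



lemma Fc_simp: "Fc r s (x,y,z) = s*(x*y*z - r^2*z^3) - (x^2*y + x*y^2)"
  by (simp add: Fc_def)
lemma lc_simp: "lc a (u1,u2,u3) b (v1,v2,v3) = (a*u1+b*v1, a*u2+b*v2, a*u3+b*v3)"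
  by (simp add: lc_def)

definition Dd :: "real \<Rightarrow> real \<Rightarrow> pt \<Rightarrow> pt \<Rightarrow> real" where
  "Dd r s U V = (case U of (x,y,z) \<Rightarrow> case V of (a,b,c) \<Rightarrow>
      y*(s*z-2*x-y)*a + x*(s*z-x-2*y)*b + (s*x*y-3*s*r^2*z^2)*c)"

lemma Dd_simp: "Dd r s (x,y,z) (a,b,c) = y*(s*z-2*x-y)*a + x*(s*z-x-2*y)*b + (s*x*y-3*s*r^2*z^2)*c"
  by (simp add: Dd_def)

lemma expand: "Fc r s (lc la U mu V) = la^3 * Fc r s U + la^2*mu*Dd r s U V + la*mu^2*Dd r s V U + mu^3*Fc r s V"
  by (cases U; cases V) (simp add: lc_simp Fc_simp Dd_simp algebra_simps power2_eq_square power3_eq_cube)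

lemma nonsing:
  fixes r s x y z :: real
  assumes "r>0" "s>0" "s^2>27*r^2"
   "y*(s*z-2*x-y)=0" "x*(s*z-x-2*y)=0" "s*x*y - 3*s*r^2*z^2 = 0"
  shows "x=0 \<and> y=0 \<and> z=0"
proof (cases "y=0")
  case True
  then have "z=0" using assms by simp
  then show ?thesis using assms True by simp
next
  case y: False
  show ?thesis
  proof (cases "x=0")
    case True
    then have "z=0" using assms by simp
    then show ?thesis using assms True by simp
  next
    case x: False
    have e1: "s*z = 2*x+y" using assms(4) y by simp
    have e2: "s*z = x+2*y" using assms(5) x by simp
    have xy: "y = x" using e1 e2 by simp
    have sz: "s*z = 3*x" using e1 xy by simp
    have "x*x = 3*r^2*z^2" using assms(6) xy assms(2) by (simp add: power2_eq_square algebra_simps)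
    hence "s^2*(x*x) = 3*r^2*(s*z)^2" by (simp add: power2_eq_square algebra_simps)
    hence "s^2*(x*x) = 27*r^2*(x*x)" using sz by (simp add: power2_eq_square algebra_simps)
    hence "(s^2 - 27*r^2)*(x*x) = 0" by (simp add: algebra_simps)
    hence "x*x = 0" using assms(3) by simp
    thus ?thesis using x by simp
  qed
qed

lemma noline_core:
  fixes r s y1 y2 w1 w2 :: real
  assumes "r>0" "s>0"
   "Fc r s (y1+w1,y2+w2,1) = 0" "Fc r s (y1-w1,y2-w2,1) = 0" "Fc r s (y1,y2,1) = 0"
   "Fc r s (w1,w2,0) = 0" "(w1,w2) \<noteq> (0,0)"
  shows False
proof -
  define c2 where "c2 = s*w1*w2 - (w1*w2*(y1+y2) + (y1*w2+y2*w1)*(w1+w2))"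
  have "Fc r s (y1+w1,y2+w2,1) + Fc r s (y1-w1,y2-w2,1) - 2*Fc r s (y1,y2,1) = 2*c2"
    unfolding c2_def by (simp add: Fc_simp algebra_simps power2_eq_square power3_eq_cube)
  hence c2: "c2 = 0" using assms by simp
  have fw: "w1*w2*(w1+w2) = 0" using assms(6) by (simp add: Fc_simp algebra_simps power2_eq_square)
  have fy: "s*(y1*y2 - r^2) - y1*y2*(y1+y2) = 0" using assms(5) by (simp add: Fc_simp algebra_simps power2_eq_square)
  have sr: "s*r^2 \<noteq> 0" using assms by simp
  consider "w1 = 0" | "w2 = 0" | "w1+w2 = 0" using fw by auto
  then show False
  proof cases
    case 1
    then have "w2 \<noteq> 0" using assms(7) by simp
    moreover have "y1*w2*w2 = 0" using c2 1 unfolding c2_def by (simp add: algebra_simps)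
    ultimately have "y1 = 0" by simp
    then show False using fy sr by simp
  next
    case 2
    then have "w1 \<noteq> 0" using assms(7) by simp
    moreover have "y2*w1*w1 = 0" using c2 2 unfolding c2_def by (simp add: algebra_simps)
    ultimately have "y2 = 0" by simp
    then show False using fy sr by simp
  next
    case 3
    then have w2: "w2 = -w1" by simp
    then have "w1 \<noteq> 0" using assms(7) by auto
    moreover have "w1*w1*(s - (y1+y2)) = 0" using c2 w2 unfolding c2_def by (simp add: algebra_simps)
    ultimately have "y1+y2 = s" by simp
    then show False using fy sr by (simp add: algebra_simps)
  qed
qed



definition indep :: "pt \<Rightarrow> pt \<Rightarrow> bool" where
  "indep U V \<longleftrightarrow> (\<forall>a b. lc a U b V = (0,0,0) \<longrightarrow> a = 0 \<and> b = 0)"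

lemma noline:
  fixes r s :: real
  assumes "r>0" "s>0" "indep U V" "\<forall>la mu. Fc r s (lc la U mu V) = 0"
  shows False
proof -
  obtain u1 u2 u3 where U: "U = (u1,u2,u3)" by (cases U)
  obtain v1 v2 v3 where V: "V = (v1,v2,v3)" by (cases V)
  have H: "\<And>la mu. Fc r s (lc la U mu V) = 0" using assms(4) by blast
  have I: "\<And>a b. lc a U b V = (0,0,0) \<Longrightarrow> a = 0 \<and> b = 0" using assms(3) unfolding indep_def by blast
  show False
  proof (cases "u3 = 0 \<and> v3 = 0")
    case True
    define d where "d = u1*v2 - u2*v1"
    have d: "d \<noteq> 0"
    proof
      assume d0: "d = 0"
      have "lc v2 U (-u2) V = (0,0,0)" using True d0 unfolding U V d_def by (simp add: lc_simp algebra_simps)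
      hence a: "v2 = 0 \<and> u2 = 0" using I by force
      have "lc v1 U (-u1) V = (0,0,0)" using True d0 unfolding U V d_def by (simp add: lc_simp algebra_simps)
      hence b: "v1 = 0 \<and> u1 = 0" using I by force
      have "lc 1 U 0 V = (0,0,0)" using a b True unfolding U V by (simp add: lc_simp)
      thus False using I by force
    qed
    have e1: "((v2-v1)/d)*u1 + ((u1-u2)/d)*v1 = 1"
    proof -
      have "((v2-v1)/d)*u1 + ((u1-u2)/d)*v1 = ((v2-v1)*u1 + (u1-u2)*v1)/d" by (simp add: add_divide_distrib)
      also have "(v2-v1)*u1 + (u1-u2)*v1 = d" unfolding d_def by (simp add: algebra_simps)
      finally show ?thesis using d by simp
    qed
    have e2: "((v2-v1)/d)*u2 + ((u1-u2)/d)*v2 = 1"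
    proof -
      have "((v2-v1)/d)*u2 + ((u1-u2)/d)*v2 = ((v2-v1)*u2 + (u1-u2)*v2)/d" by (simp add: add_divide_distrib)
      also have "(v2-v1)*u2 + (u1-u2)*v2 = d" unfolding d_def by (simp add: algebra_simps)
      finally show ?thesis using d by simp
    qed
    have "lc ((v2-v1)/d) U ((u1-u2)/d) V = (1,1,0)"
      using True e1 e2 unfolding U V by (simp add: lc_simp)
    hence "Fc r s (1,1,0) = 0" using H by metis
    thus False by (simp add: Fc_simp)
  next
    case False
    obtain a1 b1 where ab: "snd (snd (lc a1 U b1 V)) = 1"
    proof (cases "u3 = 0")
      case True
      then have "v3 \<noteq> 0" using False by simp
      then show ?thesis using that[of 0 "1/v3"] unfolding U V by (simp add: lc_simp)
    next
      case f: False
      then show ?thesis using that[of "1/u3" 0] unfolding U V by (simp add: lc_simp)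
    qed
    define y1 where "y1 = fst (lc a1 U b1 V)"
    define y2 where "y2 = fst (snd (lc a1 U b1 V))"
    define w1 where "w1 = v3*u1 - u3*v1"
    define w2 where "w2 = v3*u2 - u3*v2"
    have Y: "lc a1 U b1 V = (y1,y2,1)" using ab unfolding y1_def y2_def by (metis prod.collapse)
    have W: "lc v3 U (-u3) V = (w1,w2,0)" unfolding U V w1_def w2_def by (simp add: lc_simp algebra_simps)
    have Wn: "(w1,w2) \<noteq> (0,0)"
    proof
      assume "(w1,w2) = (0,0)"
      hence "lc v3 U (-u3) V = (0,0,0)" using W by simp
      thus False using I False by force
    qed
    have Yc: "a1*u1+b1*v1 = y1" "a1*u2+b1*v2 = y2" "a1*u3+b1*v3 = 1" using Y unfolding U V by (simp_all add: lc_simp)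
    have "lc (a1+v3) U (b1-u3) V = (y1+w1,y2+w2,1)"
      using Yc unfolding U V w1_def w2_def by (simp add: lc_simp algebra_simps)
    hence f1: "Fc r s (y1+w1,y2+w2,1) = 0" using H by metis
    have "lc (a1-v3) U (b1+u3) V = (y1-w1,y2-w2,1)"
      using Yc unfolding U V w1_def w2_def by (simp add: lc_simp algebra_simps)
    hence f2: "Fc r s (y1-w1,y2-w2,1) = 0" using H by metis
    have f3: "Fc r s (y1,y2,1) = 0" using H Y by metis
    have f4: "Fc r s (w1,w2,0) = 0" using H W by metis
    show False using noline_core[OF assms(1,2) f1 f2 f3 f4 Wn] .
  qed
qed



lemma lc10: "lc 1 P 0 Q = P" by (cases P; cases Q) (simp add: lc_simp)
lemma lc01: "lc 0 P 1 Q = Q" by (cases P; cases Q) (simp add: lc_simp)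

lemma sq3pos: fixes a b c :: real assumes "\<not> (a = 0 \<and> b = 0 \<and> c = 0)" shows "a^2+b^2+c^2 > 0"
proof (rule ccontr)
  assume "\<not> a^2+b^2+c^2 > 0"
  hence "a^2 = 0" "b^2 = 0" "c^2 = 0" using zero_le_power2[of a] zero_le_power2[of b] zero_le_power2[of c] by linarith+
  thus False using assms by simp
qed

lemma exists_third:
  fixes r s :: real
  assumes rs: "r>0" "s>0" "s^2>27*r^2" and cP: "on_curve r s P" and cQ: "on_curve r s Q"
  shows "\<exists>R. third_pt r s P Q R"
proof (cases "indep P Q")
  case True
  define B where "B = Dd r s P Q"
  define C where "C = Dd r s Q P"
  have FP: "Fc r s P = 0" and FQ: "Fc r s Q = 0" using cP cQ unfolding on_curve_def by auto
  have id: "\<And>la mu. Fc r s (lc la P mu Q) = la^2*mu*B + la*mu^2*C"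
    unfolding B_def C_def by (simp add: expand FP FQ)
  have BC: "\<not> (B = 0 \<and> C = 0)"
  proof
    assume "B = 0 \<and> C = 0"
    hence "\<forall>la mu. Fc r s (lc la P mu Q) = 0" using id by simp
    thus False using noline[OF rs(1,2) True] by blast
  qed
  define R where "R = lc (-C) P B Q"
  have Rn: "R \<noteq> (0,0,0)"
  proof
    assume "R = (0,0,0)"
    hence "-C = 0 \<and> B = 0" using True unfolding indep_def R_def by blast
    thus False using BC by simp
  qed
  have FR: "Fc r s R = 0" unfolding R_def id by (simp add: algebra_simps power2_eq_square)
  have "third_pt r s P Q R"
    unfolding third_pt_def
    apply (intro conjI)
    using cP apply simp
    using cQ apply simp
    using Rn FR apply (simp add: on_curve_def)
    apply (rule exI[of _ P], rule exI[of _ Q], rule exI[of _ 1], rule exI[of _ 0],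
           rule exI[of _ 0], rule exI[of _ 1], rule exI[of _ "-C"], rule exI[of _ B], rule exI[of _ "-1"])
    using True unfolding indep_def
    by (simp add: lc10 lc01 R_def id algebra_simps power2_eq_square)
  then show ?thesis by blast
next
  case False
  obtain x y z where P: "P = (x,y,z)" by (cases P)
  have FP: "Fc r s P = 0" and FQ: "Fc r s Q = 0" and Pn: "P \<noteq> (0,0,0)" and Qn: "Q \<noteq> (0,0,0)"
    using cP cQ unfolding on_curve_def by auto
  obtain a b where ab: "lc a P b Q = (0,0,0)" "\<not> (a = 0 \<and> b = 0)"
    using False unfolding indep_def by blast
  have b: "b \<noteq> 0"
  proof
    assume b0: "b = 0"
    hence "a \<noteq> 0" using ab by simp
    moreover have "a*x = 0 \<and> a*y = 0 \<and> a*z = 0" using ab(1) b0 P by (cases Q) (simp add: lc_simp)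
    ultimately show False using Pn P by simp
  qed
  define c where "c = -a/b"
  have Qc: "Q = (c*x, c*y, c*z)"
  proof -
    obtain q1 q2 q3 where Q: "Q = (q1,q2,q3)" by (cases Q)
    have "a*x + b*q1 = 0" "a*y + b*q2 = 0" "a*z + b*q3 = 0" using ab(1) P Q by (simp_all add: lc_simp)
    thus ?thesis using b unfolding Q c_def by (simp add: field_simps)
  qed
  have c0: "c \<noteq> 0" using Qc Qn by auto
  define gx where "gx = y*(s*z-2*x-y)"
  define gy where "gy = x*(s*z-x-2*y)"
  define gz where "gz = s*x*y-3*s*r^2*z^2"
  define V where "V = (gy*z - gz*y, gz*x - gx*z, gx*y - gy*x)"
  have euler: "gx*x+gy*y+gz*z = 0"
  proof -
    have "gx*x+gy*y+gz*z = 3 * Fc r s P" unfolding P gx_def gy_def gz_def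
      by (simp add: Fc_simp algebra_simps power2_eq_square power3_eq_cube)
    thus ?thesis using FP by simp
  qed
  have Gn: "\<not> (gx = 0 \<and> gy = 0 \<and> gz = 0)"
    using nonsing[OF rs, of y z x] Pn P unfolding gx_def gy_def gz_def by (auto simp: algebra_simps)
  have lag: "(gy*z - gz*y)^2 + (gz*x - gx*z)^2 + (gx*y - gy*x)^2 = (gx^2+gy^2+gz^2)*(x^2+y^2+z^2) - (gx*x+gy*y+gz*z)^2"
    by (simp add: algebra_simps power2_eq_square)
  have pos1: "gx^2+gy^2+gz^2 > 0" using Gn by (auto intro: sq3pos)
  have pos2: "x^2+y^2+z^2 > 0" using Pn P by (auto intro: sq3pos)
  have Vpos: "(gy*z - gz*y)^2 + (gz*x - gx*z)^2 + (gx*y - gy*x)^2 > 0"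
    using lag euler pos1 pos2 by simp
  have DPV: "Dd r s P V = 0" unfolding P V_def gx_def gy_def gz_def
    by (simp add: Dd_simp algebra_simps)
  have ind: "indep P V"
    unfolding indep_def
  proof (intro allI impI)
    fix a' b' assume h: "lc a' P b' V = (0,0,0)"
    hence h1: "a'*x + b'*(gy*z - gz*y) = 0" "a'*y + b'*(gz*x - gx*z) = 0" "a'*z + b'*(gx*y - gy*x) = 0"
      unfolding P V_def by (simp_all add: lc_simp)
    have "a'*(x^2+y^2+z^2) = x*(a'*x + b'*(gy*z - gz*y)) + y*(a'*y + b'*(gz*x - gx*z)) + z*(a'*z + b'*(gx*y - gy*x))"
      by (simp add: algebra_simps power2_eq_square)
    hence "a'*(x^2+y^2+z^2) = 0" using h1 by simp
    hence a0: "a' = 0" using pos2 by simp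
    hence "b'*(gy*z - gz*y) = 0" "b'*(gz*x - gx*z) = 0" "b'*(gx*y - gy*x) = 0" using h1 by simp_all
    hence "b' = 0 \<or> ((gy*z - gz*y) = 0 \<and> (gz*x - gx*z) = 0 \<and> (gx*y - gy*x) = 0)" by auto
    hence "b' = 0" using Vpos by auto
    thus "a' = 0 \<and> b' = 0" using a0 by simp
  qed
  define Bc where "Bc = Dd r s V P"
  define Dv where "Dv = Fc r s V"
  have id: "\<And>la mu. Fc r s (lc la P mu V) = la*mu^2*Bc + mu^3*Dv"
    unfolding Bc_def Dv_def by (simp add: expand FP DPV)
  have BD: "\<not> (Bc = 0 \<and> Dv = 0)"
  proof
    assume "Bc = 0 \<and> Dv = 0"
    hence "\<forall>la mu. Fc r s (lc la P mu V) = 0" using id by simp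
    thus False using noline[OF rs(1,2) ind] by blast
  qed
  define R where "R = lc (-Dv) P Bc V"
  have Rn: "R \<noteq> (0,0,0)"
  proof
    assume "R = (0,0,0)"
    hence "-Dv = 0 \<and> Bc = 0" using ind unfolding indep_def R_def by blast
    thus False using BD by simp
  qed
  have FR: "Fc r s R = 0" unfolding R_def id by (simp add: algebra_simps power2_eq_square power3_eq_cube)
  have QV: "Q = lc c P 0 V" unfolding Qc P by (cases V) (simp add: lc_simp)
  have "third_pt r s P Q R"
    unfolding third_pt_def
    apply (intro conjI)
    using cP apply simp
    using cQ apply simp
    using Rn FR apply (simp add: on_curve_def)
    apply (rule exI[of _ P], rule exI[of _ V], rule exI[of _ 1], rule exI[of _ 0],
           rule exI[of _ c], rule exI[of _ 0], rule exI[of _ "-Dv"], rule exI[of _ Bc], rule exI[of _ "1/c"])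
    using ind c0 unfolding indep_def
    by (simp add: lc10 QV R_def id algebra_simps power2_eq_square power3_eq_cube)
  then show ?thesis by blast
qed



definition tri :: "pt \<Rightarrow> bool" where
  "tri X = (case X of (x,y,z) \<Rightarrow> x*z > 0 \<and> y*z > 0)"
definition isO :: "pt \<Rightarrow> bool" where
  "isO X = (case X of (x,y,z) \<Rightarrow> x \<noteq> 0 \<and> y = -x \<and> z = 0)"
definition ell :: "real \<Rightarrow> pt \<Rightarrow> real" where
  "ell c X = (case X of (x,y,z) \<Rightarrow> x + y - c*z)"

lemma tri_simp: "tri (x,y,z) = (x*z > 0 \<and> y*z > 0)" by (simp add: tri_def)
lemma isO_simp: "isO (x,y,z) = (x \<noteq> 0 \<and> y = -x \<and> z = 0)" by (simp add: isO_def)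
lemma ell_simp: "ell c (x,y,z) = x + y - c*z" by (simp add: ell_def)
lemma ell_lc: "ell c (lc a U b V) = a * ell c U + b * ell c V"
  by (cases U; cases V) (simp add: ell_simp lc_simp algebra_simps)

lemma pos_scale: "(k::real) > 0 \<Longrightarrow> (0 < k*a) = (0 < a)" by (simp add: zero_less_mult_iff)
lemma both_pos: "(a::real)*b > 0 \<Longrightarrow> a+b > 0 \<Longrightarrow> a > 0 \<and> b > 0"
  by (auto simp: zero_less_mult_iff)

lemma tri_iff:
  fixes r s x y z :: real
  assumes "r>0" "s>0" "Fc r s (x,y,z) = 0"
  shows "tri (x,y,z) \<longleftrightarrow> z \<noteq> 0 \<and> (x+y)*z > 0 \<and> (x+y)*z < s*z^2"
proof (cases "z = 0")
  case True then show ?thesis by (simp add: tri_simp)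
next
  case z: False
  have cur: "x*y*((x+y)*z) = s*(x*y)*z^2 - s*r^2*z^4"
  proof -
    have "s*(x*y*z - r^2*z^3) = x^2*y + x*y^2" using assms(3) by (simp add: Fc_simp)
    hence "z*(s*(x*y*z - r^2*z^3)) = z*(x^2*y + x*y^2)" by simp
    thus ?thesis by (simp add: algebra_simps power2_eq_square power3_eq_cube power4_eq_xxxx)
  qed
  have z2: "z^2 > 0" using z by simp
  have z4: "s*r^2*z^4 > 0" using z assms by simp
  show ?thesis
  proof
    assume t: "tri (x,y,z)"
    hence a: "x*z > 0" "y*z > 0" by (auto simp: tri_simp)
    have "(x*z)*(y*z) > 0" using a by simp
    hence "(x*y)*z^2 > 0" by (simp add: power2_eq_square algebra_simps)
    hence m: "x*y > 0" using z2 zero_less_mult_pos2 by blast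
    have "x*y*((x+y)*z) < x*y*(s*z^2)" using cur z4 by (simp add: algebra_simps)
    hence "(x+y)*z < s*z^2" using m mult_less_cancel_left_pos by blast
    moreover have "(x+y)*z > 0" using a by (simp add: algebra_simps)
    ultimately show "z \<noteq> 0 \<and> (x+y)*z > 0 \<and> (x+y)*z < s*z^2" using z by simp
  next
    assume h: "z \<noteq> 0 \<and> (x+y)*z > 0 \<and> (x+y)*z < s*z^2"
    have "x*y*(s*z^2 - (x+y)*z) = s*r^2*z^4" using cur by (simp add: algebra_simps)
    hence "x*y*(s*z^2 - (x+y)*z) > 0" using z4 by simp
    hence m: "x*y > 0" using h by (simp add: zero_less_mult_iff)
    have "(x*y)*z^2 > 0" using m z2 by simp
    hence p: "(x*z)*(y*z) > 0" by (simp add: power2_eq_square algebra_simps)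
    have sm: "x*z + y*z > 0" using h by (simp add: algebra_simps)
    have "x*z > 0 \<and> y*z > 0" using both_pos[OF p sm] .
    thus "tri (x,y,z)" by (simp add: tri_simp)
  qed
qed

lemma tri_scale: "c \<noteq> 0 \<Longrightarrow> tri (c*x,c*y,c*z) = tri (x,y,z)"
proof -
  assume c: "c \<noteq> 0"
  have "c*x*(c*z) = (c*c)*(x*z)" "c*y*(c*z) = (c*c)*(y*z)" by (simp_all add: algebra_simps)
  moreover have "c*c > 0" using c by (metis not_real_square_gt_zero)
  ultimately show ?thesis unfolding tri_simp using pos_scale by presburger
qed

lemma ell_s_nz:
  fixes r s x y z :: real
  assumes "r>0" "s>0" "Fc r s (x,y,z) = 0" "(x,y,z) \<noteq> (0,0,0)" "\<not> isO (x,y,z)"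
  shows "ell s (x,y,z) \<noteq> 0"
proof
  assume "ell s (x,y,z) = 0"
  hence e: "x + y = s*z" by (simp add: ell_simp)
  have "Fc r s (x,y,z) = -s*r^2*z^3"
  proof -
    have "x^2*y + x*y^2 = x*y*(x+y)" by (simp add: algebra_simps power2_eq_square)
    thus ?thesis using e by (simp add: Fc_simp algebra_simps)
  qed
  hence "z = 0" using assms by simp
  thus False using assms e by (auto simp: isO_simp)
qed

lemma F_on_ells:
  fixes r s x y z :: real
  assumes "x + y = s*z"
  shows "Fc r s (x,y,z) = -s*r^2*z^3"
proof -
  have "x^2*y + x*y^2 = x*y*(x+y)" by (simp add: algebra_simps power2_eq_square)
  thus ?thesis using assms by (simp add: Fc_simp algebra_simps)
qed

lemma F_on_ellc:
  fixes r s c x y z :: real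
  assumes "x + y = c*z" "c^2*(s-c) = 4*s*r^2"
  shows "Fc r s (x,y,z) = -(s-c)*z*(x - c*z/2)^2"
proof -
  have y: "y = c*z - x" using assms by simp
  have "4*Fc r s (x,y,z) = 4*(-(s-c)*z*(x - c*z/2)^2)"
  proof -
    have "4*Fc r s (x,y,z) = 4*(s*((x*(c*z-x))*z - r^2*z^3) - x*(c*z-x)*(c*z))" unfolding y Fc_simp
      by (simp add: algebra_simps power2_eq_square)
    also have "... = -(s-c)*z*(4*(x - c*z/2)^2) + z^3*(c^2*(s-c) - 4*s*r^2)"
      by (simp add: algebra_simps power2_eq_square power3_eq_cube)
    also have "... = 4*(-(s-c)*z*(x - c*z/2)^2)" using assms(2) by simp
    finally show ?thesis .
  qed
  thus ?thesis by simp
qed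



definition det3 :: "pt \<Rightarrow> pt \<Rightarrow> pt \<Rightarrow> real" where
  "det3 P Q R = (case P of (a1,a2,a3) \<Rightarrow> case Q of (b1,b2,b3) \<Rightarrow> case R of (c1,c2,c3) \<Rightarrow>
     a1*(b2*c3 - b3*c2) - a2*(b1*c3 - b3*c1) + a3*(b1*c2 - b2*c1))"

lemma det3_simp: "det3 (a1,a2,a3) (b1,b2,b3) (c1,c2,c3) = a1*(b2*c3 - b3*c2) - a2*(b1*c3 - b3*c1) + a3*(b1*c2 - b2*c1)"
  by (simp add: det3_def)

lemma det_lc: "det3 (lc p1 (u1,u2,u3) p2 (v1,v2,v3)) (lc q1 (u1,u2,u3) q2 (v1,v2,v3)) (lc r1 (u1,u2,u3) r2 (v1,v2,v3)) = 0"
  unfolding lc_simp det3_simp by algebra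

lemma third_collinear: "third_pt r s P Q R \<Longrightarrow> det3 P Q R = 0"
  unfolding third_pt_def
  apply (elim conjE exE)
  subgoal for U V p1 p2 q1 q2 r1 r2 k
    by (cases U; cases V) (simp only: det_lc)
  done


lemma third_prod:
  assumes "third_pt r s P Q R"
  shows "\<exists>k U V. k \<noteq> 0 \<and> (\<forall>c. k * (ell c P * ell c Q * ell c R) = Fc r s (lc (ell c V) U (-(ell c U)) V))"
proof -
  obtain U V p1 p2 q1 q2 r1 r2 k where
    h: "P = lc p1 U p2 V" "Q = lc q1 U q2 V" "R = lc r1 U r2 V" "k \<noteq> 0"
       "\<forall>la mu. Fc r s (lc la U mu V) = k * (p2*la - p1*mu) * (q2*la - q1*mu) * (r2*la - r1*mu)"
    using assms unfolding third_pt_def by blast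
  have "\<forall>c. k * (ell c P * ell c Q * ell c R) = Fc r s (lc (ell c V) U (-(ell c U)) V)"
  proof
    fix c
    have "Fc r s (lc (ell c V) U (-(ell c U)) V) = k * (p2*(ell c V) - p1*(-(ell c U))) * (q2*(ell c V) - q1*(-(ell c U))) * (r2*(ell c V) - r1*(-(ell c U)))"
      using h(5) by blast
    moreover have "ell c P = p1*ell c U + p2*ell c V" "ell c Q = q1*ell c U + q2*ell c V" "ell c R = r1*ell c U + r2*ell c V"
      using h(1-3) by (simp_all add: ell_lc)
    ultimately show "k * (ell c P * ell c Q * ell c R) = Fc r s (lc (ell c V) U (-(ell c U)) V)"
      by (simp add: algebra_simps)
  qed
  thus ?thesis using h(4) by blast
qed

lemma ell_W: "ell c (lc (ell c V) U (-(ell c U)) V) = 0"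
  by (simp add: ell_lc)

lemma z_W: "snd (snd (lc (ell c V) U (-(ell c U)) V)) =
   snd (snd U) * (fst V + fst (snd V)) - snd (snd V) * (fst U + fst (snd U))"
  by (cases U; cases V) (simp add: lc_simp ell_simp algebra_simps)

lemma third_dbl:
  assumes "third_pt r s (a1,a2,a3) (b1,b2,b3) R" "R = (c*b1, c*b2, c*b3)"
  shows "Fc r s (b1+a1, b2+a2, b3+a3) = Fc r s (b1-a1, b2-a2, b3-a3)"
proof -
  obtain U V p1 p2 q1 q2 r1 r2 k where
    h: "\<forall>a b. lc a U b V = (0,0,0) \<longrightarrow> a = 0 \<and> b = 0"
       "(a1,a2,a3) = lc p1 U p2 V" "(b1,b2,b3) = lc q1 U q2 V" "R = lc r1 U r2 V" "k \<noteq> 0"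
       "\<forall>la mu. Fc r s (lc la U mu V) = k * (p2*la - p1*mu) * (q2*la - q1*mu) * (r2*la - r1*mu)"
    using assms(1) unfolding third_pt_def by blast
  obtain u1 u2 u3 where U: "U = (u1,u2,u3)" by (cases U)
  obtain v1 v2 v3 where V: "V = (v1,v2,v3)" by (cases V)
  have "lc (r1 - c*q1) U (r2 - c*q2) V = (0,0,0)"
    using h(3,4) assms(2) unfolding U V by (simp add: lc_simp algebra_simps)
  hence "r1 - c*q1 = 0 \<and> r2 - c*q2 = 0" using h(1) by blast
  hence rr: "r1 = c*q1" "r2 = c*q2" by auto
  have e1: "lc (q1+p1) U (q2+p2) V = (b1+a1, b2+a2, b3+a3)"
    using h(2,3) unfolding U V by (simp add: lc_simp algebra_simps)
  have e2: "lc (q1-p1) U (q2-p2) V = (b1-a1, b2-a2, b3-a3)"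
    using h(2,3) unfolding U V by (simp add: lc_simp algebra_simps)
  have "Fc r s (b1+a1, b2+a2, b3+a3) = k * (p2*(q1+p1) - p1*(q2+p2)) * (q2*(q1+p1) - q1*(q2+p2)) * (r2*(q1+p1) - r1*(q2+p2))"
    using h(6) e1 by metis
  also have "... = k * (p2*(q1-p1) - p1*(q2-p2)) * (q2*(q1-p1) - q1*(q2-p2)) * (r2*(q1-p1) - r1*(q2-p2))"
    unfolding rr by (simp add: algebra_simps)
  also have "... = Fc r s (b1-a1, b2-a2, b3-a3)"
    using h(6) e2 by metis
  finally show ?thesis .
qed



locale cub =
  fixes r s u0 u1 u2 :: real
  assumes r: "r>0" and sp: "s>0" and big: "s^2>27*r^2"
    and o0: "u0<0" and o1: "0<u1" and o12: "u1<u2" and o2: "u2<s"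
    and fac: "\<And>t. t^2*(s-t) - 4*s*r^2 = -((t-u0)*(t-u1)*(t-u2))"
begin

lemma root0: "u0^2*(s-u0) = 4*s*r^2" using fac[of u0] by simp
lemma root1: "u1^2*(s-u1) = 4*s*r^2" using fac[of u1] by simp
lemma root2: "u2^2*(s-u2) = 4*s*r^2" using fac[of u2] by simp

lemma roots_only: "t^2*(s-t) = 4*s*r^2 \<Longrightarrow> t=u0 \<or> t=u1 \<or> t=u2"
  using fac[of t] by simp

lemma region:
  assumes "t<s" "t^2*(s-t) \<ge> 4*s*r^2"
  shows "t \<le> u0 \<or> (u1 \<le> t \<and> t \<le> u2)"
proof (rule ccontr)
  assume n: "\<not> (t \<le> u0 \<or> (u1 \<le> t \<and> t \<le> u2))"
  have le: "(t-u0)*(t-u1)*(t-u2) \<le> 0" using fac[of t] assms by simp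
  show False
  proof (cases "t < u1")
    case True
    hence "(t-u0) > 0" "(t-u1) < 0" "(t-u2) < 0" using n o12 by auto
    hence "(t-u0)*(t-u1)*(t-u2) > 0" by (simp add: mult_pos_neg mult_neg_neg)
    thus False using le by simp
  next
    case False
    hence "(t-u0) > 0" "(t-u1) > 0" "(t-u2) > 0" using n o0 o1 o12 by auto
    hence "(t-u0)*(t-u1)*(t-u2) > 0" by simp
    thus False using le by simp
  qed
qed

lemma curve_t:
  assumes "Fc r s (x,y,z) = 0" "z \<noteq> 0" "x+y = t*z"
  shows "t \<noteq> s \<and> (t<s \<longrightarrow> t^2*(s-t) \<ge> 4*s*r^2)"
proof -
  have "Fc r s (x,y,z) = z*(x*y*(s-t) - s*r^2*z^2)"
  proof -
    have "x^2*y + x*y^2 = x*y*(x+y)" by (simp add: algebra_simps power2_eq_square)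
    thus ?thesis using assms(3) by (simp add: Fc_simp algebra_simps power2_eq_square power3_eq_cube)
  qed
  hence c: "x*y*(s-t) = s*r^2*z^2" using assms by simp
  have z2: "z^2 > 0" using assms by simp
  have ts: "t \<noteq> s" using c z2 r sp by auto
  moreover have "t<s \<longrightarrow> t^2*(s-t) \<ge> 4*s*r^2"
  proof
    assume ts': "t<s"
    have "4*(x*y) \<le> (x+y)^2" using zero_le_power2[of "x-y"] by (simp add: algebra_simps power2_eq_square)
    hence "4*(x*y) \<le> t^2*z^2" using assms(3) by (simp add: power_mult_distrib)
    hence "4*(x*y)*(s-t) \<le> t^2*z^2*(s-t)" using ts' by (simp add: mult_right_mono)
    hence "4*s*r^2*z^2 \<le> (t^2*(s-t))*z^2" using c by (simp add: algebra_simps)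
    thus "t^2*(s-t) \<ge> 4*s*r^2" using z2 by (simp add: mult_le_cancel_right_pos)
  qed
  ultimately show ?thesis by simp
qed

lemma tri_of_t:
  assumes "Fc r s (x,y,z) = 0" "z \<noteq> 0" "x+y = t*z"
  shows "tri (x,y,z) \<longleftrightarrow> (0<t \<and> t<s)"
proof -
  have z2: "z^2 > 0" using assms by simp
  have "tri (x,y,z) \<longleftrightarrow> (t*z^2 > 0 \<and> t*z^2 < s*z^2)"
    using tri_iff[OF r sp assms(1)] assms(2,3) by (simp add: power2_eq_square algebra_simps)
  also have "... \<longleftrightarrow> (0<t \<and> t<s)" using z2 by (simp add: zero_less_mult_iff mult_less_cancel_right_pos)
  finally show ?thesis .
qed

lemma sgn_core:
  assumes "c = u0 \<or> c = u1" "t \<noteq> c" "t \<noteq> s" "t<s \<longrightarrow> t \<le> u0 \<or> (u1\<le>t \<and> t \<le> u2)"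
  shows "((t-c)*(t-s) < 0) \<longleftrightarrow> (0<t \<and> t<s)"
  using assms o0 o1 o12 o2 by (auto simp: mult_less_0_iff)

lemma sgn:
  assumes "c = u0 \<or> c = u1" "Fc r s (x,y,z) = 0" "(x,y,z) \<noteq> (0,0,0)" "\<not> isO (x,y,z)" "ell c (x,y,z) \<noteq> 0"
  shows "(ell c (x,y,z) * ell s (x,y,z) < 0) \<longleftrightarrow> tri (x,y,z)"
proof (cases "z = 0")
  case True
  then show ?thesis by (simp add: ell_simp tri_simp)
next
  case z: False
  define t where "t = (x+y)/z"
  have xy: "x+y = t*z" using z unfolding t_def by simp
  have ct: "t \<noteq> s \<and> (t<s \<longrightarrow> t^2*(s-t) \<ge> 4*s*r^2)" using curve_t[OF assms(2) z xy] .
  have tc: "t \<noteq> c" using assms(5) xy by (auto simp: ell_simp)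
  have "ell c (x,y,z) * ell s (x,y,z) = ((t-c)*(t-s))*z^2" using xy by (simp add: ell_simp algebra_simps power2_eq_square)
  hence "(ell c (x,y,z) * ell s (x,y,z) < 0) \<longleftrightarrow> (t-c)*(t-s) < 0" using z by (simp add: mult_less_0_iff)
  also have "... \<longleftrightarrow> (0<t \<and> t<s)" using sgn_core[OF assms(1) tc] ct region by blast
  also have "... \<longleftrightarrow> tri (x,y,z)" using tri_of_t[OF assms(2) z xy] by simp
  finally show ?thesis .
qed

lemma zero_ell:
  assumes "c = u0 \<or> c = u1 \<or> c = u2" "Fc r s (x,y,z) = 0" "(x,y,z) \<noteq> (0,0,0)" "\<not> isO (x,y,z)" "ell c (x,y,z) = 0"
  shows "z \<noteq> 0 \<and> x = c*z/2 \<and> y = c*z/2"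
proof -
  have rc: "c^2*(s-c) = 4*s*r^2" using assms(1) root0 root1 root2 by auto
  have cs: "s - c > 0" using assms(1) o0 o1 o12 o2 by auto
  have xy: "x + y = c*z" using assms(5) by (simp add: ell_simp)
  have "-(s-c)*z*(x - c*z/2)^2 = 0" using F_on_ellc[OF xy rc] assms(2) by simp
  hence h: "z = 0 \<or> x = c*z/2" using cs by auto
  have z: "z \<noteq> 0"
  proof
    assume z0: "z = 0"
    hence "y = -x" using xy by simp
    thus False using assms(3,4) z0 by (auto simp: isO_simp)
  qed
  thus ?thesis using h xy by auto
qed

lemma O_lemma:
  assumes "Fc r s (a1,a2,a3) = 0" "Fc r s (b1,b2,b3) = 0" "(a1,a2,a3) \<noteq> (0,0,0)" "(b1,b2,b3) \<noteq> (0,0,0)"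
    "\<not> isO (a1,a2,a3)" "\<not> isO (b1,b2,b3)" "(a1+a2)*b3 = (b1+b2)*a3"
  shows "tri (a1,a2,a3) \<longleftrightarrow> tri (b1,b2,b3)"
proof (cases "a3 = 0 \<or> b3 = 0")
  case True
  have "a3 = 0 \<and> b3 = 0"
  proof (cases "a3 = 0")
    case a: True
    show ?thesis
    proof (rule ccontr)
      assume "\<not> (a3 = 0 \<and> b3 = 0)"
      hence "b3 \<noteq> 0" using a by simp
      hence "a2 = -a1" using assms(7) a by simp
      thus False using assms(3,5) a by (auto simp: isO_simp)
    qed
  next
    case a: False
    hence b: "b3 = 0" using True by simp
    hence "b2 = -b1" using assms(7) a by simp
    thus ?thesis using assms(4,6) b by (auto simp: isO_simp)
  qed
  thus ?thesis by (simp add: tri_simp)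
next
  case False
  define t where "t = (a1+a2)/a3"
  have ta: "a1+a2 = t*a3" using False unfolding t_def by simp
  have tb: "b1+b2 = t*b3" using False assms(7) unfolding t_def by (simp add: field_simps)
  show ?thesis using tri_of_t[OF assms(1) _ ta] tri_of_t[OF assms(2) _ tb] False by simp
qed

lemma prod_nonneg:
  assumes "third_pt r s P Q R" "c = u0 \<or> c = u1 \<or> c = u2"
  shows "(ell c P * ell s P) * (ell c Q * ell s Q) * (ell c R * ell s R) \<ge> 0"
proof -
  obtain k U V where h: "k \<noteq> 0" "\<forall>c. k * (ell c P * ell c Q * ell c R) = Fc r s (lc (ell c V) U (-(ell c U)) V)"
    using third_prod[OF assms(1)] by blast
  have rc: "c^2*(s-c) = 4*s*r^2" using assms(2) root0 root1 root2 by auto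
  have cs: "s - c > 0" using assms(2) o0 o1 o12 o2 by auto
  obtain x1 y1 z1 where W1: "lc (ell c V) U (-(ell c U)) V = (x1,y1,z1)" by (metis prod_cases3)
  obtain x2 y2 z2 where W2: "lc (ell s V) U (-(ell s U)) V = (x2,y2,z2)" by (metis prod_cases3)
  have e1: "x1 + y1 = c*z1" using ell_W[of c V U] W1 by (simp add: ell_simp)
  have e2: "x2 + y2 = s*z2" using ell_W[of s V U] W2 by (simp add: ell_simp)
  have zz: "z1 = z2" using z_W[of c V U] z_W[of s V U] W1 W2 by simp
  have f1: "k * (ell c P * ell c Q * ell c R) = -(s-c)*z1*(x1 - c*z1/2)^2"
    using h(2) W1 F_on_ellc[OF e1 rc] by metis
  have f2: "k * (ell s P * ell s Q * ell s R) = -s*r^2*z1^3"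
    using h(2) W2 F_on_ells[OF e2] zz by metis
  have "(k*k) * ((ell c P * ell s P) * (ell c Q * ell s Q) * (ell c R * ell s R))
      = (k * (ell c P * ell c Q * ell c R)) * (k * (ell s P * ell s Q * ell s R))" by (simp add: algebra_simps)
  also have "... = ((s-c)*s*r^2) * ((z1^2)^2 * (x1 - c*z1/2)^2)" unfolding f1 f2
    by (simp add: algebra_simps power2_eq_square power3_eq_cube)
  also have "... \<ge> 0" using cs sp by simp
  finally have "(k*k) * ((ell c P * ell s P) * (ell c Q * ell s Q) * (ell c R * ell s R)) \<ge> 0" .
  moreover have "k*k > 0" using h(1) by (metis not_real_square_gt_zero)
  ultimately show ?thesis by (simp add: zero_le_mult_iff)
qed

lemma diag:
  assumes "Fc r s (x,x,z) = 0" "(x,x,z) \<noteq> (0,0,0)"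
  shows "z \<noteq> 0 \<and> (x+x = u0*z \<or> x+x = u1*z \<or> x+x = u2*z)"
proof -
  have z: "z \<noteq> 0"
  proof
    assume "z = 0"
    hence "-2*x^3 = 0" using assms(1) by (simp add: Fc_simp power2_eq_square power3_eq_cube)
    hence "x = 0" by simp
    thus False using assms(2) \<open>z = 0\<close> by simp
  qed
  define t where "t = (x+x)/z"
  have xt: "x+x = t*z" using z unfolding t_def by simp
  have "4*Fc r s (x,x,z) = z^3*(t^2*(s-t) - 4*s*r^2)"
  proof -
    have x: "x = t*z/2" using xt by simp
    show ?thesis unfolding x by (simp add: Fc_simp algebra_simps power2_eq_square power3_eq_cube)
  qed
  hence "t^2*(s-t) = 4*s*r^2" using assms(1) z by simp
  hence "t=u0 \<or> t=u1 \<or> t=u2" by (rule roots_only)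
  thus ?thesis using xt z by auto
qed

end


lemma dblO: "Fc r s (1+a1,-1+a2,a3) - Fc r s (1-a1,-1-a2,-a3) = 2*(a1+a2-s*a3) + 2*Fc r s (a1,a2,a3)"
  by (simp add: Fc_simp algebra_simps power2_eq_square power3_eq_cube)

lemma dblT: "Fc r s (a*q+x,a*q+y,q+z) - Fc r s (a*q-x,a*q-y,q-z) = 2*Fc r s (x,y,z) + 2*q^2*(a*(s-3*a)*(x+y)+(s*a^2-3*s*r^2)*z)"
  by (simp add: Fc_simp algebra_simps power2_eq_square power3_eq_cube)

lemma det_diag1: "det3 (b*p,b*p,p) (a*q,a*q,q) (c1,c2,c3) = (c1-c2)*p*q*(b-a)"
  by (simp add: det3_simp algebra_simps)
lemma det_diag2: "det3 (b*p,b*p,p) (b1,b2,b3) (a*w,a*w,w) = (b2-b1)*p*w*(b-a)"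
  by (simp add: det3_simp algebra_simps)

lemma one_neg:
  fixes qP qQ qR :: real
  assumes "qP < 0" "qP*qQ*qR \<ge> 0" "qQ \<noteq> 0" "qR \<noteq> 0"
  shows "qR < 0 \<longleftrightarrow> \<not> qQ < 0"
proof -
  have "qP*(qQ*qR) \<ge> 0" using assms(2) by (simp add: mult.assoc)
  hence "qQ*qR \<le> 0" using assms(1) by (simp add: zero_le_mult_iff)
  hence "qQ*qR < 0" using assms(3,4) by (simp add: order_le_less)
  thus ?thesis by (auto simp: mult_less_0_iff)
qed

context cub begin

lemma sgn':
  assumes "c = u0 \<or> c = u1" "on_curve r s X" "\<not> isO X" "ell c X \<noteq> 0"
  shows "(ell c X * ell s X < 0) \<longleftrightarrow> tri X"
  using assms sgn by (cases X) (auto simp: on_curve_def)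

lemma ells':
  assumes "on_curve r s X" "\<not> isO X"
  shows "ell s X \<noteq> 0"
  using assms ell_s_nz[OF r sp] by (cases X) (auto simp: on_curve_def)

lemma zero_ell':
  assumes "c = u0 \<or> c = u1 \<or> c = u2" "on_curve r s X" "\<not> isO X" "ell c X = 0"
  shows "\<exists>q. q \<noteq> 0 \<and> X = ((c/2)*q, (c/2)*q, q)"
proof -
  obtain x y z where X: "X = (x,y,z)" by (cases X)
  have "z \<noteq> 0 \<and> x = c*z/2 \<and> y = c*z/2" using zero_ell[of c x y z] assms X by (auto simp: on_curve_def)
  thus ?thesis using X by auto
qed

lemma t0_dbl:
  assumes th: "third_pt r s P Q R" and Q0: "Q = ((u0/2)*q, (u0/2)*q, q)" "q \<noteq> 0"
    and R0: "R = ((u0/2)*w, (u0/2)*w, w)"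
  shows "ell u0 P = 0"
proof -
  obtain x y z where P: "P = (x,y,z)" by (cases P)
  define a where "a = u0/2"
  have FP: "Fc r s (x,y,z) = 0" using th P unfolding third_pt_def on_curve_def by auto
  have "R = ((w/q)*(a*q), (w/q)*(a*q), (w/q)*q)" using R0 Q0(2) unfolding a_def by auto
  hence "Fc r s (a*q+x, a*q+y, q+z) = Fc r s (a*q-x, a*q-y, q-z)"
    using third_dbl[of r s x y z "a*q" "a*q" q R "w/q"] th P Q0 unfolding a_def by simp
  hence e: "q^2*(a*(s-3*a)*(x+y)+(s*a^2-3*s*r^2)*z) = 0" using dblT[of r s a q x y z] FP by simp
  have ra: "s*r^2 = a^2*(s-2*a)" using root0 unfolding a_def by (simp add: power2_eq_square algebra_simps)
  have h: "s*a^2-3*s*r^2 = -2*a*a*(s-3*a)"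
  proof -
    have "s*a^2-3*s*r^2 = s*a^2 - 3*(s*r^2)" by simp
    also have "... = s*a^2 - 3*(a^2*(s-2*a))" using ra by simp
    also have "... = -2*a*a*(s-3*a)" by (simp add: algebra_simps power2_eq_square)
    finally show ?thesis .
  qed
  have ee: "a*(s-3*a)*(x+y)+(s*a^2-3*s*r^2)*z = a*(s-3*a)*(x+y-2*a*z)"
    unfolding h by (simp add: algebra_simps)
  have "q^2*(a*(s-3*a))*(x+y-2*a*z) = 0" using e unfolding ee by (simp add: mult.assoc)
  moreover have "a \<noteq> 0" "s - 3*a \<noteq> 0" using o0 sp unfolding a_def by auto
  ultimately have "x+y-2*a*z = 0" using Q0(2) by simp
  thus ?thesis using P unfolding a_def by (simp add: ell_simp)
qed

end


lemma pos_scale2: "(m::real) > 0 \<Longrightarrow> (0 < k*m) = (0 < k)" by (simp add: zero_less_mult_iff)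

context cub begin

lemma zero_tri:
  assumes "c = u0 \<or> c = u1 \<or> c = u2" "on_curve r s X" "\<not> isO X" "ell c X = 0"
  shows "tri X \<longleftrightarrow> c > 0"
proof -
  obtain q where q: "q \<noteq> 0" "X = ((c/2)*q, (c/2)*q, q)" using zero_ell'[OF assms] by blast
  have qq: "q*q > 0" using q(1) by (metis not_real_square_gt_zero)
  have "(0 < (c/2)*q*q) = (0 < c/2)" unfolding mult.assoc by (rule pos_scale2[OF qq])
  moreover have "tri X \<longleftrightarrow> (0 < (c/2)*q*q)" using q(2) by (simp add: tri_simp)
  ultimately show ?thesis by simp
qed

lemma not_both:
  assumes "on_curve r s X" "\<not> isO X" "ell u0 X = 0"
  shows "ell u1 X \<noteq> 0"
proof -
  obtain q where q: "q \<noteq> 0" "X = ((u0/2)*q, (u0/2)*q, q)" using zero_ell'[of u0 X] assms by blast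
  have "ell u1 X = (u0 - u1)*q" using q(2) by (simp add: ell_simp algebra_simps)
  thus ?thesis using q(1) o0 o1 by simp
qed

lemma tri_notO: "tri X \<Longrightarrow> \<not> isO X"
  by (cases X) (auto simp: tri_simp isO_simp)

lemma diag_tri:
  assumes "c1 + c1 = u*c3" "c3 \<noteq> 0"
  shows "tri (c1,c1,c3) \<longleftrightarrow> u > 0"
proof -
  have e: "c1*c3 = (u/2)*(c3*c3)" using assms(1) by (simp add: algebra_simps)
  have p: "c3*c3 > 0" using assms(2) by (metis not_real_square_gt_zero)
  have "(0 < c1*c3) = (0 < u/2)" unfolding e by (rule pos_scale2[OF p])
  moreover have "tri (c1,c1,c3) \<longleftrightarrow> (0 < c1*c3)" by (simp add: tri_simp)
  ultimately show ?thesis by simp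
qed

lemma parity:
  assumes th: "third_pt r s P Q R" and tP: "tri P" and nQ: "\<not> isO Q" and nR: "\<not> isO R"
  shows "tri R \<longleftrightarrow> \<not> tri Q"
proof -
  have cP: "on_curve r s P" and cQ: "on_curve r s Q" and cR: "on_curve r s R"
    using th unfolding third_pt_def by auto
  have nP: "\<not> isO P" using tP by (rule tri_notO)
  have P0: "ell u0 P \<noteq> 0"
  proof
    assume "ell u0 P = 0"
    hence "tri P \<longleftrightarrow> u0 > 0" using zero_tri[of u0 P] cP nP by blast
    thus False using tP o0 by simp
  qed
  show ?thesis
  proof (cases "ell u0 Q \<noteq> 0 \<and> ell u0 R \<noteq> 0")
    case True
    have a: "ell u0 P * ell s P < 0" using sgn'[of u0 P] cP nP P0 tP by simp
    have b: "(ell u0 P * ell s P) * (ell u0 Q * ell s Q) * (ell u0 R * ell s R) \<ge> 0"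
      using prod_nonneg[OF th, of u0] by simp
    have c: "ell u0 Q * ell s Q \<noteq> 0" using True ells'[OF cQ nQ] by simp
    have d: "ell u0 R * ell s R \<noteq> 0" using True ells'[OF cR nR] by simp
    have "ell u0 R * ell s R < 0 \<longleftrightarrow> \<not> ell u0 Q * ell s Q < 0" using one_neg[OF a b c d] .
    thus ?thesis using sgn'[of u0 Q] sgn'[of u0 R] cQ nQ cR nR True by simp
  next
    case False1: False
    show ?thesis
    proof (cases "ell u1 P \<noteq> 0 \<and> ell u1 Q \<noteq> 0 \<and> ell u1 R \<noteq> 0")
      case True
      have a: "ell u1 P * ell s P < 0" using sgn'[of u1 P] cP nP True tP by simp
      have b: "(ell u1 P * ell s P) * (ell u1 Q * ell s Q) * (ell u1 R * ell s R) \<ge> 0"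
        using prod_nonneg[OF th, of u1] by simp
      have c: "ell u1 Q * ell s Q \<noteq> 0" using True ells'[OF cQ nQ] by simp
      have d: "ell u1 R * ell s R \<noteq> 0" using True ells'[OF cR nR] by simp
      have "ell u1 R * ell s R < 0 \<longleftrightarrow> \<not> ell u1 Q * ell s Q < 0" using one_neg[OF a b c d] .
      thus ?thesis using sgn'[of u1 Q] sgn'[of u1 R] cQ nQ cR nR True by simp
    next
      case False2: False
      consider "ell u1 Q = 0" | "ell u1 R = 0" | "ell u1 P = 0" using False2 by blast
      then show ?thesis
      proof cases
        case 1
        have "ell u0 Q \<noteq> 0" using not_both[OF cQ nQ] 1 by blast
        hence "ell u0 R = 0" using False1 by blast
        hence "\<not> tri R" using zero_tri[of u0 R] cR nR o0 by auto
        moreover have "tri Q" using zero_tri[of u1 Q] cQ nQ o1 1 by auto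
        ultimately show ?thesis by simp
      next
        case 2
        have "ell u0 R \<noteq> 0" using not_both[OF cR nR] 2 by blast
        hence "ell u0 Q = 0" using False1 by blast
        hence "\<not> tri Q" using zero_tri[of u0 Q] cQ nQ o0 by auto
        moreover have "tri R" using zero_tri[of u1 R] cR nR o1 2 by auto
        ultimately show ?thesis by simp
      next
        case 3
        obtain p where p: "p \<noteq> 0" "P = ((u1/2)*p, (u1/2)*p, p)" using zero_ell'[of u1 P] cP nP 3 by blast
        have det: "det3 P Q R = 0" using third_collinear[OF th] .
        have ab: "u1/2 - u0/2 \<noteq> 0" using o0 o1 by simp
        show ?thesis
        proof (cases "ell u0 Q = 0")
          case True
          obtain q where q: "q \<noteq> 0" "Q = ((u0/2)*q, (u0/2)*q, q)" using zero_ell'[of u0 Q] cQ nQ True by blast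
          obtain c1 c2 c3 where R: "R = (c1,c2,c3)" by (cases R)
          have "(c1-c2)*p*q*(u1/2-u0/2) = 0" using det det_diag1[of "u1/2" p "u0/2" q c1 c2 c3] p q R by simp
          hence c12: "c2 = c1" using p q ab by simp
          have FR: "Fc r s (c1,c1,c3) = 0" "(c1,c1,c3) \<noteq> (0,0,0)" using cR R c12 by (auto simp: on_curve_def)
          have dg: "c3 \<noteq> 0 \<and> (c1+c1 = u0*c3 \<or> c1+c1 = u1*c3 \<or> c1+c1 = u2*c3)" using diag[OF FR] .
          have "\<not> c1+c1 = u0*c3"
          proof
            assume h: "c1+c1 = u0*c3"
            have "R = ((u0/2)*c3, (u0/2)*c3, c3)" using R c12 h by auto
            hence "ell u0 P = 0" using t0_dbl[OF th q(2) q(1)] by blast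
            thus False using P0 by simp
          qed
          hence "tri R" using dg diag_tri[of c1 _ c3] R c12 o1 o12 by auto
          moreover have "\<not> tri Q" using zero_tri[of u0 Q] cQ nQ o0 True by auto
          ultimately show ?thesis by simp
        next
          case False
          hence R0: "ell u0 R = 0" using False1 by blast
          obtain w where w: "w \<noteq> 0" "R = ((u0/2)*w, (u0/2)*w, w)" using zero_ell'[of u0 R] cR nR R0 by blast
          obtain b1 b2 b3 where Q: "Q = (b1,b2,b3)" by (cases Q)
          have "(b2-b1)*p*w*(u1/2-u0/2) = 0" using det det_diag2[of "u1/2" p b1 b2 b3 "u0/2" w] p w Q by simp
          hence b12: "b2 = b1" using p w ab by simp
          have FQ: "Fc r s (b1,b1,b3) = 0" "(b1,b1,b3) \<noteq> (0,0,0)" using cQ Q b12 by (auto simp: on_curve_def)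
          have dg: "b3 \<noteq> 0 \<and> (b1+b1 = u0*b3 \<or> b1+b1 = u1*b3 \<or> b1+b1 = u2*b3)" using diag[OF FQ] .
          have "\<not> b1+b1 = u0*b3"
          proof
            assume h: "b1+b1 = u0*b3"
            have "Q = ((u0/2)*b3, (u0/2)*b3, b3)" using Q b12 h by auto
            hence "ell u0 P = 0" using t0_dbl[OF th _ _ w(2)] dg by blast
            thus False using P0 by simp
          qed
          hence "tri Q" using dg diag_tri[of b1 _ b3] Q b12 o1 o12 by auto
          moreover have "\<not> tri R" using zero_tri[of u0 R] cR nR o0 R0 by auto
          ultimately show ?thesis by simp
        qed
      qed
    qed
  qed
qed

lemma step:
  assumes th: "third_pt r s P Q R" and tP: "tri P" and QO: "Q = O_pt \<or> \<not> isO Q"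
  shows "tri R \<longleftrightarrow> \<not> tri Q"
proof -
  have cP: "on_curve r s P" and cQ: "on_curve r s Q" and cR: "on_curve r s R"
    using th unfolding third_pt_def by auto
  obtain a1 a2 a3 where P: "P = (a1,a2,a3)" by (cases P)
  obtain c1 c2 c3 where R: "R = (c1,c2,c3)" by (cases R)
  have a3: "a3 \<noteq> 0" using tP P by (auto simp: tri_simp)
  have FP: "Fc r s (a1,a2,a3) = 0" using cP P by (simp add: on_curve_def)
  have nP: "\<not> isO P" using tP by (rule tri_notO)
  have det: "det3 P Q R = 0" using third_collinear[OF th] .
  show ?thesis
  proof (cases "Q = O_pt")
    case QO: True
    have tQ: "\<not> tri Q" using QO by (simp add: O_pt_def tri_simp)
    show ?thesis
    proof (cases "isO R")
      case True
      hence Rf: "R = (c1*1, c1*(-1), c1*0)" using R by (simp add: isO_simp)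
      have "Fc r s (1+a1, -1+a2, 0+a3) = Fc r s (1-a1, -1-a2, 0-a3)"
        using third_dbl[of r s a1 a2 a3 1 "-1" 0 R c1] th P QO Rf by (simp add: O_pt_def)
      hence "a1+a2 = s*a3" using dblO[of r s a1 a2 a3] FP by simp
      hence "-s*r^2*a3^3 = 0" using F_on_ells[of a1 a2 s a3 r] FP by simp
      hence "a3 = 0" using r sp by simp
      thus ?thesis using a3 by simp
    next
      case False
      have "(a1+a2)*c3 = (c1+c2)*a3" using det P R QO by (simp add: det3_simp O_pt_def algebra_simps)
      hence "tri P \<longleftrightarrow> tri R" using O_lemma[of a1 a2 a3 c1 c2 c3] cP cR P R nP False
        by (simp add: on_curve_def)
      thus ?thesis using tP tQ by simp
    qed
  next
    case False
    hence nQ: "\<not> isO Q" using QO by simp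
    show ?thesis
    proof (cases "isO R")
      case True
      obtain b1 b2 b3 where Q: "Q = (b1,b2,b3)" by (cases Q)
      have c: "c1 \<noteq> 0" "c2 = -c1" "c3 = 0" using True R by (auto simp: isO_simp)
      have "c1*((a1+a2)*b3 - (b1+b2)*a3) = 0" using det P Q R c by (simp add: det3_simp algebra_simps)
      hence "(a1+a2)*b3 = (b1+b2)*a3" using c(1) by simp
      hence "tri P \<longleftrightarrow> tri Q" using O_lemma[of a1 a2 a3 b1 b2 b3] cP cQ P Q nP nQ
        by (simp add: on_curve_def)
      moreover have "\<not> tri R" using True R by (simp add: isO_simp tri_simp)
      ultimately show ?thesis using tP by simp
    next
      case False
      show ?thesis using parity[OF th tP nQ False] .
    qed
  qed
qed

end


lemma isO_proj: "isO X \<Longrightarrow> proj_eq X O_pt"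
  by (cases X) (auto simp: isO_simp proj_eq_def O_pt_def intro!: exI[of _ "1/fst X"])

lemma proj_not_tri: "proj_eq X O_pt \<Longrightarrow> \<not> tri X"
  by (cases X) (auto simp: proj_eq_def O_pt_def tri_simp)

lemma swap_curve: "on_curve r s (swap_xy X) = on_curve r s X"
  by (cases X) (auto simp: swap_xy_def on_curve_def Fc_simp algebra_simps)

lemma swap_tri: "tri (swap_xy X) = tri X"
  by (cases X) (auto simp: swap_xy_def tri_simp)

theorem corollary3:
  fixes r s x y :: real
  assumes "r > 0" and "s > 3 * sqrt 3 * r"
    and "on_curve r s (x, y, 1)" and "x > 0" and "y > 0"
  shows "\<not> (has_finite_order r s (x, y, 1) \<and> odd (point_order r s (x, y, 1)))"
proof
  assume h: "has_finite_order r s (x, y, 1) \<and> odd (point_order r s (x, y, 1))"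
  define P where "P = (x, y, (1::real))"
  have cP: "on_curve r s P" using assms(3) unfolding P_def .
  have tP: "tri P" unfolding P_def using assms(4,5) by (simp add: tri_simp)
  have pos: "3 * sqrt 3 * r > 0" using assms(1) by simp
  hence sp: "s > 0" using assms(2) by linarith
  have "(3 * sqrt 3 * r)^2 < s^2" using assms(2) pos by (intro power_strict_mono) auto
  moreover have "(3 * sqrt 3 * r)^2 = 27*r^2" by (simp add: power_mult_distrib)
  ultimately have big: "s^2 > 27*r^2" by simp
  obtain u0 u1 u2 where u: "u0<0" "0<u1" "u1<u2" "u2<s"
    "\<forall>t. t^2*(s-t) - 4*s*r^2 = -((t-u0)*(t-u1)*(t-u2))"
    using roots[OF assms(1) big sp] by blast
  interpret cub r s u0 u1 u2
    using u assms(1) sp big by unfold_locales auto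
  define m where "m = point_order r s P"
  have ex: "\<exists>n. n > 0 \<and> proj_eq (cmult r s n P) O_pt"
    using h unfolding has_finite_order_def P_def by blast
  have hm: "m > 0 \<and> proj_eq (cmult r s m P) O_pt"
    unfolding m_def point_order_def using LeastI_ex[OF ex] .
  have mins: "\<And>k. 0 < k \<Longrightarrow> k < m \<Longrightarrow> \<not> proj_eq (cmult r s k P) O_pt"
    unfolding m_def point_order_def using not_less_Least by blast
  have odm: "odd m" using h unfolding m_def P_def by simp
  have inv: "k \<le> m \<Longrightarrow> on_curve r s (cmult r s k P) \<and> (tri (cmult r s k P) \<longleftrightarrow> odd k)" for k
  proof (induction k)
    case 0
    show ?case by (simp add: O_pt_def on_curve_def Fc_simp tri_simp)
  next
    case (Suc k)
    hence km: "k < m" by simp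
    define Q where "Q = cmult r s k P"
    have IH: "on_curve r s Q \<and> (tri Q \<longleftrightarrow> odd k)" using Suc km unfolding Q_def by simp
    have QO: "Q = O_pt \<or> \<not> isO Q"
    proof (cases "k = 0")
      case True thus ?thesis unfolding Q_def by simp
    next
      case False
      hence "\<not> proj_eq Q O_pt" using mins km unfolding Q_def by simp
      thus ?thesis using isO_proj by blast
    qed
    have "\<exists>R. third_pt r s P Q R" using exists_third[OF assms(1) sp big cP] IH by blast
    hence th: "third_pt r s P Q (SOME R. third_pt r s P Q R)" by (rule someI_ex)
    define R where "R = (SOME R. third_pt r s P Q R)"
    have th': "third_pt r s P Q R" using th unfolding R_def .
    have eq: "cmult r s (Suc k) P = swap_xy R" unfolding R_def Q_def by (simp add: cadd_def)
    have cR: "on_curve r s R" using th' unfolding third_pt_def by simp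
    have "tri R \<longleftrightarrow> \<not> tri Q" using step[OF th' tP QO] .
    thus ?case unfolding eq using swap_curve swap_tri cR IH by simp
  qed
  have "tri (cmult r s m P)" using inv[of m] odm by simp
  thus False using proj_not_tri hm by blast
qed


end
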